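(* Let $G$ be a finite group such that either $G$ cannot be generated by two elements, or $G$ has trivial center. Then the difference graph $\mathcal{D}(G)$ is null (has no edges) if and only if $\mathcal{D}(H)$ is null for every proper subgroup $H$ of $G$.
   Context: For a finite group $G$ with identity $e$: the intersection power graph $\mathcal{G}_I(G)$ has vertex set $G$, two distinct non-identity vertices $x,y$ being adjacent iff $\langle x\rangle\cap\langle y\rangle\neq\{e\}$, and $e$ being adjacent to every other vertex. The power graph $\mathcal{P}(G)$ has vertex set $G$, two distinct vertices being adjacent iff one is a power of the other. The undeleted difference graph of $G$ has vertex set $G$ and edge set $E(\mathcal{G}_I(G))\setminus E(\mathcal{P}(G))$; the difference graph $\mathcal{D}(G)$ is obtained from it by deleting all isolated vertices. $\mathcal{D}(G)$ is null iff it has no edges, i.e. iff $\mathcal{G}_I(G)=\mathcal{P}(G)$. *)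

theory Defs
  imports "HOL-Algebra.Algebra"
begin

definition group_center :: "('a, 'b) monoid_scheme \<Rightarrow> 'a set" where
  "group_center G = {z \<in> carrier G. \<forall>g \<in> carrier G. z \<otimes>\<^bsub>G\<^esub> g = g \<otimes>\<^bsub>G\<^esub> z}"

definition ipg_edge :: "('a, 'b) monoid_scheme \<Rightarrow> 'a \<Rightarrow> 'a \<Rightarrow> bool" where
  "ipg_edge G x y \<longleftrightarrow> x \<in> carrier G \<and> y \<in> carrier G \<and> x \<noteq> y \<and>
     (x = \<one>\<^bsub>G\<^esub> \<or> y = \<one>\<^bsub>G\<^esub> \<or>
      generate G {x} \<inter> generate G {y} \<noteq> {\<one>\<^bsub>G\<^esub>})"

definition pg_edge :: "('a, 'b) monoid_scheme \<Rightarrow> 'a \<Rightarrow> 'a \<Rightarrow> bool" where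
  "pg_edge G x y \<longleftrightarrow> x \<in> carrier G \<and> y \<in> carrier G \<and> x \<noteq> y \<and>
     ((\<exists>n::nat. y = x [^]\<^bsub>G\<^esub> n) \<or> (\<exists>n::nat. x = y [^]\<^bsub>G\<^esub> n))"

text \<open>Edge of the (undeleted) difference graph. Deleting isolated vertices does not
  change the edge set, so D(G) is null iff there is no such edge.\<close>
definition diff_edge :: "('a, 'b) monoid_scheme \<Rightarrow> 'a \<Rightarrow> 'a \<Rightarrow> bool" where
  "diff_edge G x y \<longleftrightarrow> ipg_edge G x y \<and> \<not> pg_edge G x y"

definition diff_graph_null :: "('a, 'b) monoid_scheme \<Rightarrow> bool" where
  "diff_graph_null G \<longleftrightarrow> (\<forall>x y. \<not> diff_edge G x y)"

end

theory Submission
  imports Defs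
begin

lemma comm_subgroup:
  fixes G (structure)
  assumes "group G" "w \<in> carrier G"
  shows "subgroup {g \<in> carrier G. g \<otimes>\<^bsub>G\<^esub> w = w \<otimes>\<^bsub>G\<^esub> g} G"
proof -
  interpret group G by fact
  show ?thesis
  proof (rule subgroupI)
    fix a assume a: "a \<in> {g \<in> carrier G. g \<otimes> w = w \<otimes> g}"
    hence ac: "a \<in> carrier G" and aw: "a \<otimes> w = w \<otimes> a" by auto
    have "inv a \<otimes> w = inv a \<otimes> w \<otimes> (a \<otimes> inv a)" using ac assms(2) by simp
    also have "\<dots> = inv a \<otimes> (a \<otimes> w) \<otimes> inv a" using ac assms(2) aw by (simp add: m_assoc)
    also have "\<dots> = w \<otimes> inv a" using ac assms(2) by (simp add: m_assoc[symmetric])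
    finally show "inv a \<in> {g \<in> carrier G. g \<otimes> w = w \<otimes> g}" using ac by simp
  next
    fix a b assume a: "a \<in> {g \<in> carrier G. g \<otimes> w = w \<otimes> g}" and b: "b \<in> {g \<in> carrier G. g \<otimes> w = w \<otimes> g}"
    hence "a \<otimes> b \<otimes> w = w \<otimes> (a \<otimes> b)" using assms(2)
      by (auto simp: m_assoc) (metis m_assoc)
    thus "a \<otimes> b \<in> {g \<in> carrier G. g \<otimes> w = w \<otimes> g}" using a b by auto
  qed (use assms(2) in \<open>auto intro!: exI[of _ "\<one>"]\<close>)
qed

lemma gen_comm:
  fixes G (structure)
  assumes "group G" "w \<in> carrier G" "S \<subseteq> carrier G"
    "\<And>s. s \<in> S \<Longrightarrow> s \<otimes>\<^bsub>G\<^esub> w = w \<otimes>\<^bsub>G\<^esub> s" "z \<in> generate G S"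
  shows "z \<otimes>\<^bsub>G\<^esub> w = w \<otimes>\<^bsub>G\<^esub> z"
proof -
  interpret group G by fact
  have "generate G S \<subseteq> {g \<in> carrier G. g \<otimes> w = w \<otimes> g}"
    using generate_subgroup_incl[OF _ comm_subgroup[OF assms(1,2)]] assms(3,4) by blast
  thus ?thesis using assms(5) by blast
qed

lemma diff_edge_sub:
  fixes G (structure)
  assumes "group G" "subgroup H G"
  shows "diff_edge (G\<lparr>carrier := H\<rparr>) x y \<longleftrightarrow> x \<in> H \<and> y \<in> H \<and> diff_edge G x y"
proof -
  interpret group G by fact
  have pw: "\<And>a (n::nat). a [^]\<^bsub>G\<lparr>carrier := H\<rparr>\<^esub> n = a [^] n"
    by (simp add: nat_pow_def)
  have gc: "x \<in> H \<Longrightarrow> generate (G\<lparr>carrier := H\<rparr>) {x} = generate G {x}" for x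
    using generate_consistent[OF _ assms(2)] by simp
  have sub: "H \<subseteq> carrier G" using assms(2) subgroup.subset by blast
  show ?thesis
    unfolding diff_edge_def ipg_edge_def pg_edge_def pw
    using gc sub by auto
qed

theorem theorem2p2:
  fixes G :: "('a, 'b) monoid_scheme"
  assumes "group G" and "finite (carrier G)"
    and "(\<not> (\<exists>a \<in> carrier G. \<exists>b \<in> carrier G. generate G {a, b} = carrier G))
         \<or> group_center G = {\<one>\<^bsub>G\<^esub>}"
  shows "diff_graph_null G \<longleftrightarrow>
    (\<forall>H. subgroup H G \<and> H \<noteq> carrier G \<longrightarrow> diff_graph_null (G\<lparr>carrier := H\<rparr>))"
proof
  assume "diff_graph_null G"
  thus "\<forall>H. subgroup H G \<and> H \<noteq> carrier G \<longrightarrow> diff_graph_null (G\<lparr>carrier := H\<rparr>)"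
    using diff_edge_sub[OF assms(1)] unfolding diff_graph_null_def by blast
next
  interpret group G by fact
  assume R: "\<forall>H. subgroup H G \<and> H \<noteq> carrier G \<longrightarrow> diff_graph_null (G\<lparr>carrier := H\<rparr>)"
  show "diff_graph_null G"
  proof (rule ccontr)
    assume "\<not> diff_graph_null G"
    then obtain x y where e: "diff_edge G x y" unfolding diff_graph_null_def by blast
    hence xc: "x \<in> carrier G" and yc: "y \<in> carrier G"
      unfolding diff_edge_def ipg_edge_def by auto
    have x1: "x \<noteq> \<one>\<^bsub>G\<^esub>"
    proof
      assume "x = \<one>\<^bsub>G\<^esub>"
      hence "pg_edge G x y" using e yc unfolding diff_edge_def ipg_edge_def pg_edge_def
        by (metis nat_pow_0)
      thus False using e unfolding diff_edge_def by blast
    qed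
    have y1: "y \<noteq> \<one>\<^bsub>G\<^esub>"
    proof
      assume "y = \<one>\<^bsub>G\<^esub>"
      hence "pg_edge G x y" using e xc unfolding diff_edge_def ipg_edge_def pg_edge_def
        by (metis nat_pow_0)
      thus False using e unfolding diff_edge_def by blast
    qed
    have ne: "generate G {x} \<inter> generate G {y} \<noteq> {\<one>\<^bsub>G\<^esub>}"
      using e x1 y1 unfolding diff_edge_def ipg_edge_def by blast
    have "\<one>\<^bsub>G\<^esub> \<in> generate G {x} \<inter> generate G {y}" using generate.one by blast
    then obtain z where zx: "z \<in> generate G {x}" and zy: "z \<in> generate G {y}" and z1: "z \<noteq> \<one>\<^bsub>G\<^esub>"
      using ne by blast
    have xyc: "{x, y} \<subseteq> carrier G" using xc yc by auto
    have gen: "generate G {x, y} = carrier G"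
    proof (rule ccontr)
      assume "generate G {x, y} \<noteq> carrier G"
      hence "diff_graph_null (G\<lparr>carrier := generate G {x, y}\<rparr>)"
        using R generate_is_subgroup[OF xyc] by blast
      moreover have xin: "x \<in> generate G {x, y}" and yin: "y \<in> generate G {x, y}"
        by (auto intro: generate.incl)
      ultimately have null: "diff_graph_null (G\<lparr>carrier := generate G {x, y}\<rparr>)" by blast
      have "diff_edge (G\<lparr>carrier := generate G {x, y}\<rparr>) x y"
        using diff_edge_sub[OF assms(1) generate_is_subgroup[OF xyc]] e xin yin by simp
      thus False using null unfolding diff_graph_null_def by blast
    qed
    have "\<exists>a\<in>carrier G. \<exists>b\<in>carrier G. generate G {a,b} = carrier G"
      using xc yc gen by blast
    hence cen: "group_center G = {\<one>\<^bsub>G\<^esub>}" using assms(3) by simp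
    have zc: "z \<in> carrier G" using zx generate_incl[of "{x}"] xc by blast
    have zx': "z \<otimes>\<^bsub>G\<^esub> x = x \<otimes>\<^bsub>G\<^esub> z" by (rule gen_comm[OF assms(1) xc _ _ zx]) (use xc in auto)
    have zy': "z \<otimes>\<^bsub>G\<^esub> y = y \<otimes>\<^bsub>G\<^esub> z" by (rule gen_comm[OF assms(1) yc _ _ zy]) (use yc in auto)
    have "\<forall>g \<in> carrier G. g \<otimes>\<^bsub>G\<^esub> z = z \<otimes>\<^bsub>G\<^esub> g"
    proof
      fix g assume "g \<in> carrier G"
      hence gxy: "g \<in> generate G {x, y}" using gen by simp
      show "g \<otimes>\<^bsub>G\<^esub> z = z \<otimes>\<^bsub>G\<^esub> g" by (rule gen_comm[OF assms(1) zc xyc _ gxy]) (use zx' zy' in auto)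
    qed
    hence "z \<in> group_center G" unfolding group_center_def using zc by auto
    thus False using cen z1 by blast
  qed
qed

end
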